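(* Let $f(z)=z+\sum_{n=2}^{\infty}a_nz^n$ belong to $\mathcal{S}^*_{ch}$, and let $$\gamma_1=\tfrac12 a_2,\qquad \gamma_2=\tfrac12\Big(a_3-\tfrac12 a_2^2\Big),\qquad \gamma_3=\tfrac12\Big(a_4-a_2a_3+\tfrac13 a_2^3\Big)$$ be its first three logarithmic coefficients. Then $$|H_{2,1}(F_f/2)|=|\gamma_1\gamma_3-\gamma_2^2|=\tfrac{1}{48}\left|a_2^4-12a_3^2+12a_2a_4\right|\le\frac1{16}.$$ The inequality is sharp: equality holds for $f_2(z)=z\exp\left(\int_0^z\frac{t^2+\cosh(t^2)-1}{t}\,dt\right)$, which belongs to $\mathcal{S}^*_{ch}$.
   Context: $\mathbb{D}=\{z\in\mathbb{C}:|z|<1\}$. $\mathcal{A}$ is the class of analytic functions $f$ on $\mathbb{D}$ with $f(0)=0$, $f'(0)=1$. For analytic $g,h$ on $\mathbb{D}$, $g\prec h$ means there is an analytic $\omega$ on $\mathbb{D}$ with $\omega(0)=0$, $|\omega(z)|<1$, and $g=h\circ\omega$. $\mathcal{S}^*_{ch}$ is the class of $f\in\mathcal{A}$ with $\frac{zf'(z)}{f(z)}\prec z+\cosh z$ on $\mathbb{D}$. The logarithmic coefficients $\gamma_n$ are defined by $F_f(z):=\log\frac{f(z)}{z}=2\sum_{n\ge1}\gamma_nz^n$, and $H_{2,1}(F_f/2):=\gamma_1\gamma_3-\gamma_2^2$. *)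

theory Defs
  imports "HOL-Complex_Analysis.Complex_Analysis"
begin

definition coeffA :: "(complex \<Rightarrow> complex) \<Rightarrow> nat \<Rightarrow> complex" where
  "coeffA f n = (deriv ^^ n) f 0 / fact n"

text \<open>The class S*_ch: f in A (analytic on the unit disk, f(0)=0, f'(0)=1) with
  z f'(z)/f(z) subordinate to z + cosh z.  The quotient z f'/f is required to be
  analytic on the disk, i.e. f has no zeros in the punctured disk; its value at 0
  is the removable value 1 = h(omega(0)).\<close>
definition S_ch :: "(complex \<Rightarrow> complex) set" where
  "S_ch = {f. f holomorphic_on ball 0 1 \<and> f 0 = 0 \<and> deriv f 0 = 1 \<and>
     (\<forall>z\<in>ball 0 1 - {0}. f z \<noteq> 0) \<and>
     (\<exists>\<omega>. \<omega> holomorphic_on ball 0 1 \<and> \<omega> 0 = 0 \<and>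
          (\<forall>z\<in>ball 0 1. norm (\<omega> z) < 1) \<and>
          (\<forall>z\<in>ball 0 1 - {0}. z * deriv f z / f z = \<omega> z + cosh (\<omega> z)))}"

definition gamma1 :: "(complex \<Rightarrow> complex) \<Rightarrow> complex" where
  "gamma1 f = coeffA f 2 / 2"

definition gamma2 :: "(complex \<Rightarrow> complex) \<Rightarrow> complex" where
  "gamma2 f = (coeffA f 3 - coeffA f 2 ^ 2 / 2) / 2"

definition gamma3 :: "(complex \<Rightarrow> complex) \<Rightarrow> complex" where
  "gamma3 f = (coeffA f 4 - coeffA f 2 * coeffA f 3 + coeffA f 2 ^ 3 / 3) / 2"

definition H21 :: "(complex \<Rightarrow> complex) \<Rightarrow> complex" where
  "H21 f = gamma1 f * gamma3 f - gamma2 f ^ 2"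

definition q2 :: "complex \<Rightarrow> complex" where
  "q2 t = (if t = 0 then 0 else (t^2 + cosh (t^2) - 1) / t)"

definition f2 :: "complex \<Rightarrow> complex" where
  "f2 z = z * exp (contour_integral (linepath 0 z) q2)"

end

theory Submission
  imports Defs
begin


lemma coeffA_eq: "coeffA g n = fps_expansion g 0 $ n"
  by (simp add: coeffA_def fps_expansion_def)

lemma hol_exp: "g holomorphic_on ball 0 1 \<Longrightarrow> g has_fps_expansion fps_expansion g 0"
  by (rule has_fps_expansion_fps_expansion) auto

lemma exp_uniq:
  fixes f g :: "complex \<Rightarrow> complex"
  assumes "f has_fps_expansion F" "g has_fps_expansion G" "\<And>z. z \<in> ball 0 1 \<Longrightarrow> f z = g z"
  shows "F = G"
proof (rule fps_ext)
  fix n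
  have ev: "eventually (\<lambda>z. f z = g z) (nhds 0)"
  proof -
    have "eventually (\<lambda>z. z \<in> ball 0 1) (nhds (0::complex))"
      by (rule eventually_nhds_in_open) auto
    then show ?thesis by eventually_elim (use assms(3) in auto)
  qed
  have "F $ n = (deriv ^^ n) f 0 / fact n" by (rule fps_nth_fps_expansion[OF assms(1)])
  also have "(deriv ^^ n) f 0 = (deriv ^^ n) g 0" by (intro higher_deriv_cong_ev ev refl)
  also have "\<dots> / fact n = G $ n" by (rule fps_nth_fps_expansion[OF assms(2), symmetric])
  finally show "F $ n = G $ n" .
qed

lemma sum_upto4:
  fixes h :: "nat \<Rightarrow> complex"
  shows "(\<Sum>i=0..0. h i) = h 0" "(\<Sum>i=0..1. h i) = h 0 + h 1"
    "(\<Sum>i=0..2. h i) = h 0 + h 1 + h 2" "(\<Sum>i=0..3. h i) = h 0 + h 1 + h 2 + h 3"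
    "(\<Sum>i=0..4. h i) = h 0 + h 1 + h 2 + h 3 + h 4"
  by (simp_all add: numeral_eq_Suc sum.atLeast0_atMost_Suc)

lemma coeff_rel:
  assumes hf: "f holomorphic_on ball 0 1" and f0: "f 0 = 0" and df0: "deriv f 0 = 1"
    and nz: "\<forall>z\<in>ball 0 1 - {0}. f z \<noteq> 0"
    and hw: "\<omega> holomorphic_on ball 0 1" and w0: "\<omega> 0 = 0"
    and eq: "\<forall>z\<in>ball 0 1 - {0}. z * deriv f z / f z = \<omega> z + cosh (\<omega> z)"
  shows "coeffA f 2 = coeffA \<omega> 1"
    "coeffA f 3 = coeffA \<omega> 2 / 2 + 3 * coeffA \<omega> 1 ^ 2 / 4"
    "coeffA f 4 = coeffA \<omega> 3 / 3 + 5 * coeffA \<omega> 1 * coeffA \<omega> 2 / 6 + 5 * coeffA \<omega> 1 ^ 3 / 12"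
proof -
  define F where "F = fps_expansion f 0"
  define W where "W = fps_expansion \<omega> 0"
  define C where "C = fps_expansion (\<lambda>z. cosh (\<omega> z)) 0"
  define S where "S = fps_expansion (\<lambda>z. sinh (\<omega> z)) 0"
  have hc: "(\<lambda>z. cosh (\<omega> z)) holomorphic_on ball 0 1"
    using hw by (simp add: analytic_on_open[symmetric] analytic_on_cosh)
  have hs: "(\<lambda>z. sinh (\<omega> z)) holomorphic_on ball 0 1"
    using hw by (simp add: analytic_on_open[symmetric] analytic_on_sinh)
  have eF: "f has_fps_expansion F" unfolding F_def by (rule hol_exp[OF hf])
  have eW: "\<omega> has_fps_expansion W" unfolding W_def by (rule hol_exp[OF hw])
  have eC: "(\<lambda>z. cosh (\<omega> z)) has_fps_expansion C" unfolding C_def by (rule hol_exp[OF hc])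
  have eS: "(\<lambda>z. sinh (\<omega> z)) has_fps_expansion S" unfolding S_def by (rule hol_exp[OF hs])
  have dw: "(\<omega> has_field_derivative deriv \<omega> z) (at z)" if "z \<in> ball 0 1" for z
    using hw that by (intro holomorphic_derivI) auto
  have dC: "deriv (\<lambda>z. cosh (\<omega> z)) z = sinh (\<omega> z) * deriv \<omega> z" if "z \<in> ball 0 1" for z
    by (rule DERIV_imp_deriv) (rule derivative_eq_intros dw[OF that] | simp)+
  have dS: "deriv (\<lambda>z. sinh (\<omega> z)) z = cosh (\<omega> z) * deriv \<omega> z" if "z \<in> ball 0 1" for z
    by (rule DERIV_imp_deriv) (rule derivative_eq_intros dw[OF that] | simp)+
  have EC: "fps_deriv C = S * fps_deriv W"
    by (rule exp_uniq[OF has_fps_expansion_deriv[OF eC] has_fps_expansion_mult[OF eS has_fps_expansion_deriv[OF eW]]])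
      (simp add: dC)
  have ES: "fps_deriv S = C * fps_deriv W"
    by (rule exp_uniq[OF has_fps_expansion_deriv[OF eS] has_fps_expansion_mult[OF eC has_fps_expansion_deriv[OF eW]]])
      (simp add: dS)
  have EF: "fps_X * fps_deriv F = F * (W + C)"
  proof (rule exp_uniq[OF has_fps_expansion_mult[OF has_fps_expansion_fps_X has_fps_expansion_deriv[OF eF]]
        has_fps_expansion_mult[OF eF has_fps_expansion_add[OF eW eC]]])
    fix z :: complex assume z: "z \<in> ball 0 1"
    show "z * deriv f z = f z * (\<omega> z + cosh (\<omega> z))"
    proof (cases "z = 0")
      case True then show ?thesis using f0 by simp
    next
      case False
      with z nz eq have "f z \<noteq> 0" "z * deriv f z / f z = \<omega> z + cosh (\<omega> z)" by auto
      then show ?thesis by (simp add: field_simps)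
    qed
  qed
  have cF: "coeffA f n = F $ n" "coeffA \<omega> n = W $ n" for n
    by (simp_all add: coeffA_eq F_def W_def)
  have F0: "F $ 0 = 0" and F1: "F $ Suc 0 = 1" and W0: "W $ 0 = 0" and C0: "C $ 0 = 1" and S0: "S $ 0 = 0"
    using f0 df0 w0 by (simp_all add: F_def W_def C_def S_def fps_expansion_def)
  have c1: "fps_deriv C $ n = (S * fps_deriv W) $ n" and s1: "fps_deriv S $ n = (C * fps_deriv W) $ n"
    and f1: "(fps_X * fps_deriv F) $ n = (F * (W + C)) $ n" for n
    using EC ES EF by simp_all
  note simps = fps_mult_nth sum_upto4 fps_X_mult_nth numeral_eq_Suc F0 F1 W0 C0 S0
  have C1: "C $ Suc 0 = 0" using c1[of 0] by (simp add: simps)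
  have S1: "S $ Suc 0 = W $ Suc 0" using s1[of 0] by (simp add: simps)
  have C2: "C $ Suc (Suc 0) = (W $ Suc 0 * W $ Suc 0) / 2" using c1[of 1] by (simp add: simps C1 S1 power2_eq_square field_simps)
  have S2: "S $ Suc (Suc 0) = W $ Suc (Suc 0)" using s1[of 1] by (simp add: simps C1 S1 field_simps)
  have C3: "C $ Suc (Suc (Suc 0)) = W $ Suc 0 * W $ Suc (Suc 0)" using c1[of 2] by (simp add: simps C1 S1 C2 S2 field_simps)
  have A2: "F $ Suc (Suc 0) = W $ Suc 0" using f1[of 2] by (simp add: simps C1)
  have A3: "F $ Suc (Suc (Suc 0)) = W $ Suc (Suc 0) / 2 + 3 * (W $ Suc 0 * W $ Suc 0) / 4" using f1[of 3] by (simp add: simps C1 C2 A2 field_simps power2_eq_square)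
  have A4: "F $ Suc (Suc (Suc (Suc 0))) = W $ Suc (Suc (Suc 0)) / 3 + 5 * W $ Suc 0 * W $ Suc (Suc 0) / 6 + 5 * (W $ Suc 0 * W $ Suc 0 * W $ Suc 0) / 12" using f1[of 4]
    apply (simp add: simps C1 C2 C3 A2 A3 field_simps power2_eq_square power3_eq_cube)
    by algebra
  show "coeffA f 2 = coeffA \<omega> 1"
    "coeffA f 3 = coeffA \<omega> 2 / 2 + 3 * coeffA \<omega> 1 ^ 2 / 4"
    "coeffA f 4 = coeffA \<omega> 3 / 3 + 5 * coeffA \<omega> 1 * coeffA \<omega> 2 / 6 + 5 * coeffA \<omega> 1 ^ 3 / 12"
    using A2 A3 A4 by (simp_all add: cF numeral_eq_Suc power2_eq_square power3_eq_cube)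
qed



definition schwarz :: "(complex \<Rightarrow> complex) \<Rightarrow> bool" where
  "schwarz w \<longleftrightarrow> w holomorphic_on ball 0 1 \<and> w 0 = 0 \<and> (\<forall>z\<in>ball 0 1. norm (w z) < 1)"

lemma coeffA_0: "coeffA g 0 = g 0" by (simp add: coeffA_def)
lemma coeffA_1: "coeffA g 1 = deriv g 0" "coeffA g (Suc 0) = deriv g 0" by (simp_all add: coeffA_def)

lemma c1_bound: assumes "schwarz w" shows "norm (coeffA w 1) \<le> 1"
  using assms Schwarz_Lemma(2)[of w 0] by (auto simp: schwarz_def coeffA_1)

lemma rot_coeffs:
  assumes "\<And>z. norm z < 1 \<Longrightarrow> w z = \<alpha> * z"
  shows "coeffA w 1 = \<alpha>" "coeffA w 2 = 0" "coeffA w 3 = 0"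
proof -
  have hw: "w holomorphic_on ball 0 1"
    by (rule holomorphic_transform[of "\<lambda>z. \<alpha> * z"]) (auto simp: assms intro!: holomorphic_intros)
  have "fps_expansion w 0 = fps_const \<alpha> * fps_X"
    by (rule exp_uniq[OF hol_exp[OF hw] has_fps_expansion_cmult_left[OF has_fps_expansion_fps_X]])
      (simp add: assms)
  then show "coeffA w 1 = \<alpha>" "coeffA w 2 = 0" "coeffA w 3 = 0"
    by (simp_all add: coeffA_eq)
qed

lemma rot_case:
  assumes "schwarz w" "norm (coeffA w 1) = 1"
  shows "coeffA w 2 = 0" "coeffA w 3 = 0"
proof -
  from assms have "\<exists>\<alpha>. (\<forall>z. norm z < 1 \<longrightarrow> w z = \<alpha> * z) \<and> norm \<alpha> = 1"
    by (intro Schwarz_Lemma(3)[of w 0]) (auto simp: schwarz_def coeffA_1)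
  then obtain \<alpha> where "\<And>z. norm z < 1 \<Longrightarrow> w z = \<alpha> * z" by blast
  from rot_coeffs[OF this] show "coeffA w 2 = 0" "coeffA w 3 = 0" by simp_all
qed

lemma moebius_lt1:
  fixes a w :: complex
  assumes "norm a < 1" "norm w < 1"
  shows "norm ((w - a) / (1 - cnj a * w)) < 1"
proof -
  have key: "complex_of_real (norm (1 - cnj a * w)^2 - norm (w - a)^2) =
      complex_of_real ((1 - norm a ^2) * (1 - norm w ^2))"
    unfolding of_real_diff of_real_mult complex_norm_square of_real_1 by (simp add: algebra_simps)
  hence k: "norm (1 - cnj a * w)^2 - norm (w - a)^2 = (1 - norm a ^2) * (1 - norm w ^2)"
    using of_real_eq_iff by blast
  have "0 < (1 - norm a ^2) * (1 - norm w ^2)"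
    using assms by (intro mult_pos_pos) (auto simp: power_less_one_iff abs_square_less_1)
  hence lt: "norm (w - a)^2 < norm (1 - cnj a * w)^2" using k by linarith
  hence "norm (w - a) < norm (1 - cnj a * w)"
    using power_less_imp_less_base by fastforce
  moreover have "norm (1 - cnj a * w) > 0" using lt
    by (metis norm_ge_zero order_le_less_trans power_less_imp_less_base zero_less_norm_iff)
  ultimately show ?thesis by (simp add: norm_divide divide_less_eq)
qed

lemma schur_step:
  assumes sw: "schwarz w" and lt: "norm (coeffA w 1) < 1"
  shows "\<exists>\<psi>. schwarz \<psi> \<and>
     coeffA w 2 = (1 - cnj (coeffA w 1) * coeffA w 1) * coeffA \<psi> 1 \<and>
     coeffA w 3 = (1 - cnj (coeffA w 1) * coeffA w 1) * coeffA \<psi> 2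
                  - cnj (coeffA w 1) * coeffA w 2 * coeffA \<psi> 1"
proof -
  define a where "a = coeffA w 1"
  have hw: "w holomorphic_on ball 0 1" and w0: "w 0 = 0" and wl: "\<And>z. z \<in> ball 0 1 \<Longrightarrow> norm (w z) < 1"
    using sw by (auto simp: schwarz_def)
  have da: "deriv w 0 = a" by (simp add: a_def coeffA_1)
  define \<phi> where "\<phi> = (\<lambda>z. if z = 0 then a else w z / z)"
  have "(\<lambda>z. if z = 0 then deriv w 0 else (w z - w 0) / (z - 0)) holomorphic_on ball 0 1"
    by (rule pole_lemma[OF hw]) auto
  also have "(\<lambda>z. if z = 0 then deriv w 0 else (w z - w 0) / (z - 0)) = \<phi>"
    by (auto simp: \<phi>_def da w0)
  finally have hphi: "\<phi> holomorphic_on ball 0 1" .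
  have phil: "norm (\<phi> z) < 1" if z: "z \<in> ball 0 1" for z
  proof (cases "z = 0")
    case True then show ?thesis using lt by (simp add: \<phi>_def a_def)
  next
    case False
    have le: "norm (w z) \<le> norm z"
      using Schwarz_Lemma(1)[OF hw w0, of z] wl z by auto
    have "norm (w z) \<noteq> norm z"
    proof
      assume "norm (w z) = norm z"
      then have "\<exists>\<alpha>. (\<forall>z. norm z < 1 \<longrightarrow> w z = \<alpha> * z) \<and> norm \<alpha> = 1"
        using Schwarz_Lemma(3)[OF hw w0, of 0] wl z False by auto
      then obtain \<alpha> where al: "\<And>z. norm z < 1 \<Longrightarrow> w z = \<alpha> * z" "norm \<alpha> = 1" by blast
      from rot_coeffs(1)[OF al(1)] al(2) lt show False by simp
    qed
    with le have "norm (w z) < norm z" by simp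
    then show ?thesis using False by (simp add: \<phi>_def norm_divide divide_less_eq)
  qed
  define \<psi> where "\<psi> = (\<lambda>z. (\<phi> z - a) / (1 - cnj a * \<phi> z))"
  have alt: "norm a < 1" using lt by (simp add: a_def)
  have den: "1 - cnj a * \<phi> z \<noteq> 0" if "z \<in> ball 0 1" for z
  proof
    assume "1 - cnj a * \<phi> z = 0"
    then have "norm (cnj a * \<phi> z) = 1" by (metis eq_iff_diff_eq_0 norm_one)
    moreover have "norm (cnj a * \<phi> z) < 1"
    proof -
      have "norm a * norm (\<phi> z) \<le> norm a * 1"
        by (intro mult_left_mono) (use phil[OF that] in auto)
      then show ?thesis using alt by (simp add: norm_mult)
    qed
    ultimately show False by simp
  qed
  have hpsi: "\<psi> holomorphic_on ball 0 1"
    unfolding \<psi>_def using den by (intro holomorphic_intros hphi) auto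
  have psil: "norm (\<psi> z) < 1" if "z \<in> ball 0 1" for z
    unfolding \<psi>_def by (rule moebius_lt1[OF alt phil[OF that]])
  have psi0: "\<psi> 0 = 0" by (simp add: \<psi>_def \<phi>_def)
  have spsi: "schwarz \<psi>" using hpsi psil psi0 by (simp add: schwarz_def)
  define W where "W = fps_expansion w 0"
  define P where "P = fps_expansion \<phi> 0"
  define Q where "Q = fps_expansion \<psi> 0"
  have eW: "w has_fps_expansion W" unfolding W_def by (rule hol_exp[OF hw])
  have eP: "\<phi> has_fps_expansion P" unfolding P_def by (rule hol_exp[OF hphi])
  have eQ: "\<psi> has_fps_expansion Q" unfolding Q_def by (rule hol_exp[OF hpsi])
  have WP: "W = fps_X * P"
    by (rule exp_uniq[OF eW has_fps_expansion_mult[OF has_fps_expansion_fps_X eP]])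
      (auto simp: \<phi>_def w0)
  have QP: "Q * (1 - fps_const (cnj a) * P) = P - fps_const a"
    by (rule exp_uniq[OF has_fps_expansion_mult[OF eQ has_fps_expansion_diff[OF has_fps_expansion_1 has_fps_expansion_cmult_left[OF eP]]]
          has_fps_expansion_diff[OF eP has_fps_expansion_const]])
      (use den in \<open>auto simp: \<psi>_def\<close>)
  have P0: "P $ 0 = a" by (simp add: P_def fps_expansion_def \<phi>_def)
  have Q0: "Q $ 0 = 0" by (simp add: Q_def fps_expansion_def psi0)
  have WPn: "W $ Suc n = P $ n" for n using WP by simp
  have q: "(Q * (1 - fps_const (cnj a) * P)) $ n = (P - fps_const a) $ n" for n using QP by simp
  have q1: "Q $ Suc 0 * (1 - cnj a * a) = P $ Suc 0"
    using q[of 1] by (simp add: fps_mult_nth sum_upto4 P0 Q0)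
  have q2: "Q $ Suc 0 * (- (cnj a * P $ Suc 0)) + Q $ Suc (Suc 0) * (1 - cnj a * a) = P $ Suc (Suc 0)"
    using q[of 2] by (simp add: fps_mult_nth sum_upto4 P0 Q0 numeral_eq_Suc)
  have c2: "coeffA w 2 = P $ Suc 0" using WPn[of 1] by (simp add: coeffA_eq W_def numeral_eq_Suc)
  have c3: "coeffA w 3 = P $ Suc (Suc 0)" using WPn[of 2] by (simp add: coeffA_eq W_def numeral_eq_Suc)
  have d1: "coeffA \<psi> 1 = Q $ Suc 0" "coeffA \<psi> 2 = Q $ Suc (Suc 0)"
    by (simp_all add: coeffA_eq Q_def numeral_eq_Suc)
  show ?thesis
    apply (rule exI[of _ \<psi>])
    using spsi q1 q2 c2 c3 d1 unfolding a_def[symmetric]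
    by (simp add: algebra_simps)
qed



lemma s_real: "1 - cnj a * a = complex_of_real (1 - norm a ^ 2)"
  by (metis complex_norm_square mult.commute of_real_1 of_real_diff)

lemma norm_s: "norm a \<le> 1 \<Longrightarrow> norm (1 - cnj a * a) = 1 - norm a ^ 2"
  unfolding s_real norm_of_real using abs_square_le_1 by (simp add: power_le_one)

lemma L1: assumes "schwarz w" shows "norm (coeffA w 2) \<le> 1 - norm (coeffA w 1) ^ 2"
proof -
  have b: "norm (coeffA w 1) \<le> 1" by (rule c1_bound[OF assms])
  show ?thesis
  proof (cases "norm (coeffA w 1) = 1")
    case True then show ?thesis using rot_case[OF assms True] by simp
  next
    case False
    with b have "norm (coeffA w 1) < 1" by simp
    from schur_step[OF assms this] obtain \<psi> where p: "schwarz \<psi>"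
      "coeffA w 2 = (1 - cnj (coeffA w 1) * coeffA w 1) * coeffA \<psi> 1" by blast
    have "norm (coeffA w 2) = (1 - norm (coeffA w 1) ^ 2) * norm (coeffA \<psi> 1)"
      using p(2) norm_s[OF b] by (simp add: norm_mult)
    also have "\<dots> \<le> (1 - norm (coeffA w 1) ^ 2) * 1"
      using c1_bound[OF p(1)] b by (intro mult_left_mono) (auto simp: power_le_one)
    finally show ?thesis by simp
  qed
qed

lemma L2:
  assumes "schwarz w"
  defines "a \<equiv> coeffA w 1"
  shows "\<exists>b \<beta>. coeffA w 2 = (1 - cnj a * a) * b \<and>
      coeffA w 3 = (1 - cnj a * a) * \<beta> - cnj a * (1 - cnj a * a) * b ^ 2 \<and>
      norm b \<le> 1 \<and> norm \<beta> \<le> 1 - norm b ^ 2"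
proof -
  have ab: "norm a \<le> 1" unfolding a_def by (rule c1_bound[OF assms(1)])
  show ?thesis
  proof (cases "norm a = 1")
    case True then show ?thesis
      using rot_case[OF assms(1)] by (intro exI[of _ 0]) (auto simp: a_def)
  next
    case False
    with ab have "norm (coeffA w 1) < 1" by (simp add: a_def)
    from schur_step[OF assms(1) this] obtain \<psi> where p: "schwarz \<psi>"
      "coeffA w 2 = (1 - cnj a * a) * coeffA \<psi> 1"
      "coeffA w 3 = (1 - cnj a * a) * coeffA \<psi> 2 - cnj a * coeffA w 2 * coeffA \<psi> 1"
      unfolding a_def by blast
    show ?thesis
      apply (rule exI[of _ "coeffA \<psi> 1"], rule exI[of _ "coeffA \<psi> 2"])
      using p(1,2) p(3)[unfolded p(2)] c1_bound[OF p(1)] L1[OF p(1)] by (simp add: power2_eq_square algebra_simps)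
  qed
qed

lemma real_ineq:
  fixes x u :: real
  assumes x: "0 \<le> x" "x \<le> 1" and u: "0 \<le> u" "u \<le> 1"
  shows "4*x*(1-x^2)*(1-u^2) + 4*x^2*(1-x^2)*u^2 + x^2*(1-x^2)*u + 3*(1-x^2)^2*u^2 + 3*x^4/4 \<le> 3"
proof -
  define r where "r = 1 - x^2"
  define v where "v = u^2"
  have r0: "0 \<le> r" unfolding r_def using x by (simp add: power_le_one)
  have v: "0 \<le> v" "v \<le> 1" unfolding v_def using u by (auto simp: power_le_one)
  have "0 \<le> (1-u)^2" by simp
  hence uu: "u \<le> (1 + v) / 2" unfolding v_def by (simp add: power2_eq_square algebra_simps)
  have t3: "x^2*r*u \<le> x^2*r*((1+v)/2)" using r0 uu by (intro mult_left_mono) auto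
  define G0 where "G0 = 4*x*r + x^2*r/2 + 3*x^4/4"
  define G1 where "G1 = 4*x^2*r + x^2*r + 3*r^2 + 3*x^4/4"
  have G1: "G1 \<le> 3"
  proof -
    have "G1 = 3 - x^2 - 5/4*x^4" unfolding G1_def r_def by (simp add: algebra_simps power2_eq_square power4_eq_xxxx)
    moreover have "0 \<le> x^2" "0 \<le> x^4" by simp_all
    ultimately show ?thesis by linarith
  qed
  have G0: "G0 \<le> 3"
  proof -
    have sos: "x^3 - x + 1/2 = x*(x-1)^2 + 2*(x-1/2)^2" by (simp add: algebra_simps power2_eq_square power3_eq_cube)
    have "0 \<le> x*(x-1)^2 + 2*(x-1/2)^2" using x by simp
    hence a: "4*x*r \<le> 2" unfolding r_def using sos by (simp add: algebra_simps power2_eq_square power3_eq_cube)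
    have "x^2 \<le> 1" "x^4 \<le> 1" using x by (auto simp: power_le_one)
    moreover have "x^2*r/2 + 3*x^4/4 = x^2/2 + x^4/4" unfolding r_def by (simp add: field_simps power2_eq_square power4_eq_xxxx)
    ultimately have "x^2*r/2 + 3*x^4/4 \<le> 3/4" by linarith
    with a show ?thesis unfolding G0_def by linarith
  qed
  have "4*x*(1-x^2)*(1-u^2) + 4*x^2*(1-x^2)*u^2 + x^2*(1-x^2)*u + 3*(1-x^2)^2*u^2 + 3*x^4/4
      = 4*x*r*(1-v) + 4*x^2*r* v + x^2*r*u + 3*r^2* v + 3*x^4/4"
    by (simp add: r_def v_def)
  also have "\<dots> \<le> 4*x*r*(1-v) + 4*x^2*r* v + x^2*r*((1+v)/2) + 3*r^2* v + 3*x^4/4"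
    using t3 by simp
  also have "\<dots> = (1-v) * G0 + v * G1" unfolding G0_def G1_def by (simp add: field_simps)
  also have "\<dots> \<le> (1-v) * 3 + v * 3"
    using G0 G1 v by (intro add_mono mult_left_mono) auto
  finally show ?thesis by simp
qed



lemma cineq:
  fixes a b \<beta> :: complex
  assumes a1: "norm a \<le> 1" and b1: "norm b \<le> 1" and bt: "norm \<beta> \<le> 1 - norm b ^ 2"
  shows "norm (4*a*((1 - cnj a*a)*\<beta> - cnj a*(1 - cnj a*a)*b^2) + a^2*((1 - cnj a*a)*b)
              - 3*((1 - cnj a*a)*b)^2 - 3*a^4/4) \<le> 3"
proof -
  define x where "x = norm a"
  define u where "u = norm b"
  define r where "r = 1 - x^2"
  have x: "0 \<le> x" "x \<le> 1" using a1 by (auto simp: x_def)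
  have u: "0 \<le> u" "u \<le> 1" using b1 by (auto simp: u_def)
  have r0: "0 \<le> r" unfolding r_def using x by (simp add: power_le_one)
  have s: "1 - cnj a * a = complex_of_real r" unfolding r_def x_def by (rule s_real)
  have ca: "cnj a * a = complex_of_real (x^2)" unfolding x_def
    by (metis complex_norm_square mult.commute)
  define T1 where "T1 = 4 * a * complex_of_real r * \<beta>"
  define T2 where "T2 = 4 * complex_of_real (x^2) * complex_of_real r * b^2"
  define T3 where "T3 = a^2 * complex_of_real r * b"
  define T4 where "T4 = 3 * (complex_of_real r)^2 * b^2"
  define T5 where "T5 = 3 * a^4 / 4"
  have E: "4*a*((1 - cnj a*a)*\<beta> - cnj a*(1 - cnj a*a)*b^2) + a^2*((1 - cnj a*a)*b)
              - 3*((1 - cnj a*a)*b)^2 - 3*a^4/4 = T1 - T2 + T3 - T4 - T5"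
  proof -
    have e1: "4*a*(complex_of_real r*\<beta> - cnj a*complex_of_real r*b^2) = T1 - T2"
      unfolding T1_def T2_def ca[symmetric] by (simp add: algebra_simps)
    have e3: "a^2*(complex_of_real r*b) = T3" unfolding T3_def by (simp add: algebra_simps)
    have e4: "3*(complex_of_real r*b)^2 = T4" unfolding T4_def by (simp add: power_mult_distrib)
    show ?thesis unfolding s e1 e3 e4 T5_def by simp
  qed
  have n1: "norm T1 \<le> 4*x*r*(1-u^2)"
  proof -
    have "norm T1 = 4*x*r*norm \<beta>" using r0 by (simp add: T1_def norm_mult x_def)
    also have "\<dots> \<le> 4*x*r*(1-u^2)" using bt x r0 by (intro mult_left_mono) (auto simp: u_def)
    finally show ?thesis .
  qed
  have n2: "norm T2 = 4*x^2*r*u^2" using r0 by (simp add: T2_def norm_mult norm_power u_def)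
  have n3: "norm T3 = x^2*r*u" using r0 by (simp add: T3_def norm_mult norm_power u_def x_def)
  have n4: "norm T4 = 3*r^2*u^2" using r0 by (simp add: T4_def norm_mult norm_power u_def)
  have n5: "norm T5 = 3*x^4/4" by (simp add: T5_def norm_mult norm_power norm_divide x_def)
  have "norm (T1 - T2 + T3 - T4 - T5) \<le> norm T1 + norm T2 + norm T3 + norm T4 + norm T5"
    by (smt (verit) norm_triangle_ineq norm_triangle_ineq4)
  also have "\<dots> \<le> 4*x*(1-x^2)*(1-u^2) + 4*x^2*(1-x^2)*u^2 + x^2*(1-x^2)*u + 3*(1-x^2)^2*u^2 + 3*x^4/4"
    using n1 n2 n3 n4 n5 unfolding r_def by linarith
  also have "\<dots> \<le> 3" by (rule real_ineq[OF x u])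
  finally show ?thesis unfolding E .
qed

lemma H21_a: "H21 f = (coeffA f 2 ^ 4 - 12 * coeffA f 3 ^ 2 + 12 * coeffA f 2 * coeffA f 4) / 48"
  unfolding H21_def gamma1_def gamma2_def gamma3_def by (simp add: field_simps power2_eq_square power3_eq_cube power4_eq_xxxx)

lemma H21_c:
  assumes hf: "f holomorphic_on ball 0 1" and f0: "f 0 = 0" and df0: "deriv f 0 = 1"
    and nz: "\<forall>z\<in>ball 0 1 - {0}. f z \<noteq> 0"
    and hw: "\<omega> holomorphic_on ball 0 1" and w0: "\<omega> 0 = 0"
    and eq: "\<forall>z\<in>ball 0 1 - {0}. z * deriv f z / f z = \<omega> z + cosh (\<omega> z)"
  shows "48 * H21 f = 4 * coeffA \<omega> 1 * coeffA \<omega> 3 + coeffA \<omega> 1 ^ 2 * coeffA \<omega> 2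
            - 3 * coeffA \<omega> 2 ^ 2 - 3 * coeffA \<omega> 1 ^ 4 / 4"
  unfolding H21_a coeff_rel[OF assms]
  by (simp add: field_simps power2_eq_square power3_eq_cube power4_eq_xxxx)

lemma bound:
  assumes "f \<in> S_ch" shows "norm (H21 f) \<le> 1/16"
proof -
  from assms obtain \<omega> where hf: "f holomorphic_on ball 0 1" and f0: "f 0 = 0" and df0: "deriv f 0 = 1"
    and nz: "\<forall>z\<in>ball 0 1 - {0}. f z \<noteq> 0"
    and hw: "\<omega> holomorphic_on ball 0 1" and w0: "\<omega> 0 = 0" and wl: "\<forall>z\<in>ball 0 1. norm (\<omega> z) < 1"
    and eq: "\<forall>z\<in>ball 0 1 - {0}. z * deriv f z / f z = \<omega> z + cosh (\<omega> z)"
    unfolding S_ch_def by blast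
  have sw: "schwarz \<omega>" using hw w0 wl by (simp add: schwarz_def)
  define a where "a = coeffA \<omega> 1"
  from L2[OF sw] obtain b \<beta> where p: "coeffA \<omega> 2 = (1 - cnj a * a) * b"
      "coeffA \<omega> 3 = (1 - cnj a * a) * \<beta> - cnj a * (1 - cnj a * a) * b ^ 2"
      "norm b \<le> 1" "norm \<beta> \<le> 1 - norm b ^ 2" unfolding a_def by blast
  have a1: "norm a \<le> 1" unfolding a_def by (rule c1_bound[OF sw])
  have "48 * norm (H21 f) = norm (48 * H21 f)" by (simp add: norm_mult)
  also have "\<dots> \<le> 3"
    unfolding H21_c[OF hf f0 df0 nz hw w0 eq] a_def[symmetric] p(1,2)
    by (rule cineq[OF a1 p(3,4)])
  finally show ?thesis by simp
qed



lemma q2_hol: "q2 holomorphic_on UNIV"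
proof -
  define g where "g = (\<lambda>t::complex. t^2 + cosh (t^2) - 1)"
  have hg: "g holomorphic_on UNIV" unfolding g_def
    by (simp add: analytic_on_open[symmetric] analytic_intros)
  have "(g has_field_derivative 0) (at 0)"
    unfolding g_def by (auto intro!: derivative_eq_intros)
  hence dg: "deriv g 0 = 0" by (rule DERIV_imp_deriv)
  have "(\<lambda>z. if z = 0 then deriv g 0 else (g z - g 0) / (z - 0)) holomorphic_on UNIV"
    by (rule pole_lemma[OF hg]) auto
  also have "(\<lambda>z. if z = 0 then deriv g 0 else (g z - g 0) / (z - 0)) = q2"
    unfolding dg by (auto simp: g_def q2_def fun_eq_iff)
  finally show ?thesis .
qed

lemma I_deriv: "((\<lambda>z. contour_integral (linepath 0 z) q2) has_field_derivative q2 z) (at z)"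
proof (rule triangle_contour_integrals_starlike_primitive[of UNIV q2 0 z])
  show "continuous_on UNIV q2" by (rule holomorphic_on_imp_continuous_on[OF q2_hol])
  fix b c :: complex
  show "contour_integral (linepath 0 b) q2 + contour_integral (linepath b c) q2 +
        contour_integral (linepath c 0) q2 = 0"
    by (rule has_chain_integral_chain_integral3[OF Cauchy_theorem_triangle[OF holomorphic_on_subset[OF q2_hol]]]) auto
qed auto

lemma f2_deriv: "(f2 has_field_derivative
   (exp (contour_integral (linepath 0 z) q2) + z * (exp (contour_integral (linepath 0 z) q2) * q2 z))) (at z)"
  unfolding f2_def by (auto intro!: derivative_eq_intros I_deriv)

lemma f2_in: "f2 \<in> S_ch"
proof -
  have hf: "f2 holomorphic_on ball 0 1"
    using f2_deriv by (auto simp: holomorphic_on_open)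
  have d0: "deriv f2 0 = 1" using DERIV_imp_deriv[OF f2_deriv[of 0]] by simp
  have nz: "\<forall>z\<in>ball 0 1 - {0}. f2 z \<noteq> 0" by (simp add: f2_def)
  have hw: "(\<lambda>z::complex. z^2) holomorphic_on ball 0 1" by (intro holomorphic_intros)
  have wl: "\<forall>z\<in>ball 0 1. norm ((z::complex)^2) < 1"
    by (auto simp: norm_power power_less_one_iff abs_square_less_1)
  have eq: "\<forall>z\<in>ball 0 1 - {0}. z * deriv f2 z / f2 z = z^2 + cosh (z^2)"
  proof
    fix z :: complex assume "z \<in> ball 0 1 - {0}"
    hence z: "z \<noteq> 0" by simp
    show "z * deriv f2 z / f2 z = z^2 + cosh (z^2)"
      using z unfolding DERIV_imp_deriv[OF f2_deriv[of z]]
      by (simp add: f2_def q2_def field_simps power2_eq_square)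
  qed
  show ?thesis unfolding S_ch_def
    using hf d0 nz hw wl eq by (auto simp: f2_def intro!: exI[of _ "\<lambda>z. z^2"])
qed

lemma coeff_sq: "coeffA (\<lambda>z::complex. z^2) n = (if n = 2 then 1 else 0)"
  using fps_nth_fps_expansion[OF has_fps_expansion_fps_X_power[of 2], of n]
  by (simp add: coeffA_def)

lemma H21_f2: "H21 f2 = - 1/16"
proof -
  have "f2 \<in> S_ch" by (rule f2_in)
  have hf: "f2 holomorphic_on ball 0 1"
    using f2_deriv by (auto simp: holomorphic_on_open)
  have d0: "deriv f2 0 = 1" using DERIV_imp_deriv[OF f2_deriv[of 0]] by simp
  have nz: "\<forall>z\<in>ball 0 1 - {0}. f2 z \<noteq> 0" by (simp add: f2_def)
  have hw: "(\<lambda>z::complex. z^2) holomorphic_on ball 0 1" by (intro holomorphic_intros)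
  have eq: "\<forall>z\<in>ball 0 1 - {0}. z * deriv f2 z / f2 z = z^2 + cosh (z^2)"
  proof
    fix z :: complex assume "z \<in> ball 0 1 - {0}"
    hence z: "z \<noteq> 0" by simp
    show "z * deriv f2 z / f2 z = z^2 + cosh (z^2)"
      using z unfolding DERIV_imp_deriv[OF f2_deriv[of z]]
      by (simp add: f2_def q2_def field_simps power2_eq_square)
  qed
  have "48 * H21 f2 = -3"
    using H21_c[OF hf _ d0 nz hw _ eq] by (simp add: coeff_sq f2_def)
  then show ?thesis by (simp add: field_simps)
qed

theorem theorem2p2:
  shows "(\<forall>f\<in>S_ch.
            norm (H21 f) =
              norm (coeffA f 2 ^ 4 - 12 * coeffA f 3 ^ 2 + 12 * coeffA f 2 * coeffA f 4) / 48
          \<and> norm (H21 f) \<le> 1 / 16)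
         \<and> f2 \<in> S_ch \<and> norm (H21 f2) = 1 / 16"
  using bound f2_in H21_f2 by (auto simp: H21_a norm_divide)

end
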